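(* Let $m\ge2$ and $\theta_c=\frac{m-2}{3m-2}$. There exists a constant $A=A(m)>0$ such that for every $\theta\in(\theta_c,1]$ and every $n\ge1$, $$\rho(\mathrm{Plu},m,n,\theta)\le 2\,m!\,e^{-A(\theta-\theta_c)^2 n}.$$
   Context: A ranking is a strict total order on the candidates. A discrete profile consists of candidates, $n$ voters and a ranking $P_v$ per voter. Plurality: the score of $c$ is the number of voters ranking $c$ first; the highest score wins, ties broken by an arbitrary fixed rule. CM: a rule $f$ is coalitionally manipulable in a discrete profile $P$ if there is a discrete $Q$ with the same candidates and voters such that $f(Q)\ne f(P)$ and every voter $v$ with $Q_v\ne P_v$ prefers $f(Q)$ to $f(P)$ according to $P_v$. Perturbed Culture ($m,n\ge1$, $\theta\in(0,1]$): random discrete profile with candidates $\{1,\dots,m\}$, voters $\{1,\dots,n\}$, each voter independently having ranking $1\succ\cdots\succ m$ with probability $\theta$ and a uniformly random ranking with probability $1-\theta$. $\rho(f,m,n,\theta)$: probability that $f$ is CM in the random profile. *)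

theory Defs
  imports Complex_Main
begin

text \<open>A ranking on candidates {1..m}: a list of all candidates without repetition,
  most preferred first.\<close>
definition rankings :: "nat \<Rightarrow> nat list set" where
  "rankings m = {r. distinct r \<and> set r = {1..m}}"

definition profiles :: "nat \<Rightarrow> nat \<Rightarrow> nat list list set" where
  "profiles m n = {P. length P = n \<and> set P \<subseteq> rankings m}"

definition prefers :: "nat list \<Rightarrow> nat \<Rightarrow> nat \<Rightarrow> bool" where
  "prefers r a b \<longleftrightarrow> (\<exists>i j. i < j \<and> j < length r \<and> r ! i = a \<and> r ! j = b)"

definition plu_score :: "nat list list \<Rightarrow> nat \<Rightarrow> nat" where
  "plu_score P c = card {v. v < length P \<and> hd (P ! v) = c}"

definition plurality :: "(nat set \<Rightarrow> nat) \<Rightarrow> nat \<Rightarrow> nat list list \<Rightarrow> nat" where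
  "plurality tb m P =
     tb {c \<in> {1..m}. \<forall>d \<in> {1..m}. plu_score P d \<le> plu_score P c}"

definition valid_tiebreak :: "nat \<Rightarrow> (nat set \<Rightarrow> nat) \<Rightarrow> bool" where
  "valid_tiebreak m tb \<longleftrightarrow> (\<forall>S. S \<noteq> {} \<longrightarrow> S \<subseteq> {1..m} \<longrightarrow> tb S \<in> S)"

definition CM :: "(nat list list \<Rightarrow> nat) \<Rightarrow> nat \<Rightarrow> nat list list \<Rightarrow> bool" where
  "CM f m P \<longleftrightarrow> (\<exists>Q \<in> profiles m (length P). f Q \<noteq> f P \<and>
      (\<forall>v < length P. Q ! v \<noteq> P ! v \<longrightarrow> prefers (P ! v) (f Q) (f P)))"

definition pc_weight :: "nat \<Rightarrow> real \<Rightarrow> nat list \<Rightarrow> real" where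
  "pc_weight m \<theta> r = \<theta> * (if r = [1..<m+1] then 1 else 0) + (1 - \<theta>) / fact m"

definition rho :: "(nat list list \<Rightarrow> nat) \<Rightarrow> nat \<Rightarrow> nat \<Rightarrow> real \<Rightarrow> real" where
  "rho f m n \<theta> = (\<Sum>P \<in> profiles m n.
      if CM f m P then (\<Prod>v<n. pc_weight m \<theta> (P ! v)) else 0)"

definition theta_c :: "nat \<Rightarrow> real" where
  "theta_c m = (real m - 2) / (3 * real m - 2)"

end

theory Submission
  imports Defs "HOL-Combinatorics.Multiset_Permutations"
begin

lemma rankings_perm: "rankings m = permutations_of_set {1..m}"
  unfolding rankings_def permutations_of_set_def by auto

lemma card_rankings: "card (rankings m) = fact m"
  by (simp add: rankings_perm)

lemma finite_rankings: "finite (rankings m)"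
  by (simp add: rankings_perm)

lemma finite_profiles: "finite (profiles m n)"
proof -
  have "profiles m n \<subseteq> {xs. set xs \<subseteq> rankings m \<and> length xs = n}" unfolding profiles_def by auto
  thus ?thesis using finite_lists_length_eq[OF finite_rankings] finite_subset by blast
qed

lemma profiles_Suc: "profiles m (Suc n) = (\<lambda>(r,P). r # P) ` (rankings m \<times> profiles m n)"
  unfolding profiles_def by (auto simp: length_Suc_conv image_iff)

lemma sum_prod_profiles:
  "(\<Sum>P\<in>profiles m n. \<Prod>v<n. h (P!v)) = (\<Sum>r\<in>rankings m. (h r::real)) ^ n"
proof (induction n)
  case 0
  have "profiles m 0 = {[]}" unfolding profiles_def by auto
  then show ?case by simp
next
  case (Suc n)
  have inj: "inj_on (\<lambda>(r,P). r # P) (rankings m \<times> profiles m n)" by (auto simp: inj_on_def)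
  have "(\<Sum>P\<in>profiles m (Suc n). \<Prod>v<Suc n. h (P!v)) = (\<Sum>(r,P)\<in>rankings m \<times> profiles m n. \<Prod>v<Suc n. h ((r#P)!v))"
    unfolding profiles_Suc by (subst sum.reindex[OF inj]) (simp add: case_prod_beta)
  also have "\<dots> = (\<Sum>(r,P)\<in>rankings m \<times> profiles m n. h r * (\<Prod>v<n. h (P!v)))"
    by (simp only: prod.lessThan_Suc_shift nth_Cons_0 nth_Cons_Suc)
  also have "\<dots> = (\<Sum>r\<in>rankings m. h r * (\<Sum>P\<in>profiles m n. \<Prod>v<n. h (P!v)))"
    by (simp add: sum.cartesian_product[symmetric] sum_distrib_left)
  also have "\<dots> = (\<Sum>r\<in>rankings m. h r) ^ Suc n" using Suc by (simp add: sum_distrib_right)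
  finally show ?case .
qed

definition sw :: "nat \<Rightarrow> nat \<Rightarrow> nat \<Rightarrow> nat" where
  "sw a b x = (if x = a then b else if x = b then a else x)"

lemma sw_sw[simp]: "sw a b (sw a b x) = x" by (auto simp: sw_def)
lemma sw_eq_iff: "sw a b u = x \<longleftrightarrow> u = sw a b x" by (auto simp: sw_def)
lemma sw_inj: "inj (sw a b)" by (metis injI sw_sw)
lemma map_sw_sw[simp]: "map (sw a b) (map (sw a b) r) = r" by (induction r) auto

lemma map_sw_rankings:
  assumes "a \<in> {1..m}" "b \<in> {1..m}" "r \<in> rankings m"
  shows "map (sw a b) r \<in> rankings m"
proof -
  have "sw a b ` {1..m} \<subseteq> {1..m}" using assms(1,2) by (auto simp: sw_def)
  hence "sw a b ` {1..m} = {1..m}" by (metis sw_sw image_eqI subsetI subset_antisym image_subset_iff)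
  thus ?thesis using assms(3) sw_inj unfolding rankings_def
    by (auto simp: distinct_map inj_on_subset[OF sw_inj])
qed

lemma sum_rankings_sw:
  assumes "a \<in> {1..m}" "b \<in> {1..m}"
  shows "(\<Sum>r\<in>rankings m. h (map (sw a b) r)) = (\<Sum>r\<in>rankings m. (h r::real))"
  by (rule sum.reindex_bij_witness[where i="map (sw a b)" and j="map (sw a b)"])
     (auto simp: map_sw_rankings[OF assms] comp_def)

lemma prefers_sw: "prefers (map (sw a b) r) x y \<longleftrightarrow> prefers r (sw a b x) (sw a b y)"
  unfolding prefers_def
  by (safe; (simp add: sw_eq_iff)?) (metis length_map nth_map order.strict_trans sw_eq_iff)+

lemma prefers_iff:
  assumes "distinct r" "i < length r" "j < length r"
  shows "prefers r (r!i) (r!j) \<longleftrightarrow> i < j"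
  using assms unfolding prefers_def by (auto simp: nth_eq_iff_index_eq)

lemma not_prefers_hd:
  assumes "distinct r" "r \<noteq> []"
  shows "\<not> prefers r b (hd r)"
  using assms unfolding prefers_def by (auto simp: hd_conv_nth nth_eq_iff_index_eq)

lemma prefers_hd:
  assumes "distinct r" "a \<in> set r" "hd r \<noteq> a"
  shows "prefers r (hd r) a"
proof -
  obtain j where j: "j < length r" "r!j = a" using assms(2) by (auto simp: in_set_conv_nth)
  have "r \<noteq> []" using assms(2) by auto
  hence "0 < j" using j assms(3) by (metis gr0I hd_conv_nth)
  thus ?thesis unfolding prefers_def using j \<open>r \<noteq> []\<close> by (metis hd_conv_nth)
qed

lemma prefers_total:
  assumes "distinct r" "a \<in> set r" "b \<in> set r" "a \<noteq> b"
  shows "prefers r a b \<longleftrightarrow> \<not> prefers r b a"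
proof -
  obtain i where i: "i < length r" "r!i = a" using assms(2) by (auto simp: in_set_conv_nth)
  obtain j where j: "j < length r" "r!j = b" using assms(3) by (auto simp: in_set_conv_nth)
  have "i \<noteq> j" using i j assms(4) by auto
  thus ?thesis using prefers_iff[OF assms(1) i(1) j(1)] prefers_iff[OF assms(1) j(1) i(1)] i j by auto
qed

lemma rankings_nonempty: "r \<in> rankings m \<Longrightarrow> m \<ge> 1 \<Longrightarrow> r \<noteq> []"
  unfolding rankings_def by auto

lemma hd_rankings: "r \<in> rankings m \<Longrightarrow> m \<ge> 1 \<Longrightarrow> hd r \<in> {1..m}"
proof -
  assume a: "r \<in> rankings m" "m \<ge> 1"
  hence "hd r \<in> set r" using rankings_nonempty hd_in_set by blast
  thus ?thesis using a(1) unfolding rankings_def by blast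
qed

lemma idr_rankings: "[1..<m+1] \<in> rankings m"
  unfolding rankings_def by auto

lemma hd_idr: "m \<ge> 1 \<Longrightarrow> hd [1..<m+1] = 1"
  by (simp add: hd_upt del: upt_Suc)

definition Shd :: "nat \<Rightarrow> nat \<Rightarrow> real" where
  "Shd m c = (\<Sum>r\<in>rankings m. if hd r = c then 1 else 0)"

lemma Shd_eq:
  assumes "m \<ge> 1" "c \<in> {1..m}"
  shows "Shd m c = Shd m 1"
proof -
  have 1: "1 \<in> {1..m}" using assms by auto
  have "Shd m 1 = (\<Sum>r\<in>rankings m. if hd (map (sw c 1) r) = 1 then 1 else 0)"
    unfolding Shd_def by (rule sum_rankings_sw[OF assms(2) 1, symmetric])
  also have "\<dots> = Shd m c" unfolding Shd_def
  proof (rule sum.cong)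
    fix r assume "r \<in> rankings m"
    hence "hd (map (sw c 1) r) = sw c 1 (hd r)" using rankings_nonempty assms(1) by (simp add: hd_map)
    moreover have "sw c 1 (hd r) = 1 \<longleftrightarrow> hd r = c" by (simp add: sw_eq_iff, simp add: sw_def)
    ultimately show "(if hd (map (sw c 1) r) = 1 then 1 else 0) = (if hd r = c then 1 else (0::real))" by simp
  qed simp
  finally show ?thesis by simp
qed

lemma Shd_1:
  assumes "m \<ge> 1"
  shows "Shd m 1 = fact m / m"
proof -
  have "(\<Sum>c\<in>{1..m}. Shd m c) = (\<Sum>r\<in>rankings m. \<Sum>c\<in>{1..m}. if hd r = c then 1 else 0)"
    unfolding Shd_def by (rule sum.swap)
  also have "\<dots> = (\<Sum>r\<in>rankings m. 1)"
  proof (rule sum.cong)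
    fix r assume "r \<in> rankings m"
    hence "hd r \<in> {1..m}" using hd_rankings assms by blast
    thus "(\<Sum>c\<in>{1..m}. if hd r = c then 1 else 0) = (1::real)"
    proof -
      have "(\<Sum>c\<in>{1..m}. if hd r = c then 1 else 0) = (\<Sum>c\<in>{1..m}. if c = hd r then 1 else (0::real))"
        by (rule sum.cong) auto
      also have "\<dots> = 1" using \<open>hd r \<in> {1..m}\<close> by (simp only: sum.delta finite_atLeastAtMost if_True)
      finally show ?thesis .
    qed
  qed simp
  also have "\<dots> = fact m" by (simp add: card_rankings)
  finally have "(\<Sum>c\<in>{1..m}. Shd m c) = fact m" .
  moreover have "(\<Sum>c\<in>{1..m}. Shd m c) = (\<Sum>c\<in>{1..m}. Shd m 1)"
    using Shd_eq[OF assms] by (intro sum.cong) blast+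
  hence "(\<Sum>c\<in>{1..m}. Shd m c) = m * Shd m 1" by simp
  ultimately show ?thesis using assms by (simp add: field_simps)
qed

definition Spref :: "nat \<Rightarrow> nat \<Rightarrow> nat \<Rightarrow> real" where
  "Spref m a b = (\<Sum>r\<in>rankings m. if prefers r a b then 1 else 0)"

lemma Spref_half:
  assumes "c \<in> {1..m}" "c \<noteq> 1"
  shows "Spref m c 1 = fact m / 2"
proof -
  have 1: "1 \<in> {1..m}" using assms by auto
  have "Spref m c 1 = (\<Sum>r\<in>rankings m. if prefers (map (sw c 1) r) c 1 then 1 else 0)"
    unfolding Spref_def by (rule sum_rankings_sw[OF assms(1) 1, symmetric])
  also have "\<dots> = Spref m 1 c" unfolding Spref_def prefers_sw
    by (simp add: sw_def)
  finally have eq: "Spref m c 1 = Spref m 1 c" .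
  have "Spref m c 1 + Spref m 1 c = (\<Sum>r\<in>rankings m. 1)"
    unfolding Spref_def sum.distrib[symmetric]
  proof (rule sum.cong)
    fix r assume "r \<in> rankings m"
    hence "distinct r" "c \<in> set r" "1 \<in> set r" using assms 1 unfolding rankings_def by auto
    thus "(if prefers r c 1 then 1 else 0) + (if prefers r 1 c then 1 else 0) = (1::real)"
      using prefers_total[of r c 1] assms(2) by auto
  qed simp
  also have "\<dots> = fact m" by (simp add: card_rankings)
  finally show ?thesis using eq by simp
qed

lemma pc_weight_nonneg: "0 \<le> \<theta> \<Longrightarrow> \<theta> \<le> 1 \<Longrightarrow> 0 \<le> pc_weight m \<theta> r"
  unfolding pc_weight_def by auto

lemma expect_pc:
  "(\<Sum>r\<in>rankings m. pc_weight m \<theta> r * g r) =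
     \<theta> * g [1..<m+1] + (1 - \<theta>) / fact m * (\<Sum>r\<in>rankings m. g r)"
proof -
  have "(\<Sum>r\<in>rankings m. pc_weight m \<theta> r * g r) =
     (\<Sum>r\<in>rankings m. (if r = [1..<m+1] then \<theta> * g r else 0)) + (\<Sum>r\<in>rankings m. (1 - \<theta>) / fact m * g r)"
    unfolding sum.distrib[symmetric] pc_weight_def by (rule sum.cong) (auto simp: algebra_simps)
  also have "\<dots> = \<theta> * g [1..<m+1] + (1 - \<theta>) / fact m * (\<Sum>r\<in>rankings m. g r)"
    using idr_rankings[of m] by (simp add: sum.delta' finite_rankings sum_distrib_left del: upt_Suc)
  finally show ?thesis .
qed

lemma total_pc: "(\<Sum>r\<in>rankings m. pc_weight m \<theta> r) = 1"
  using expect_pc[of m \<theta> "\<lambda>_. 1"] by (simp add: card_rankings)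

lemma exp_neg_bound:
  fixes t :: real assumes "0 \<le> t"
  shows "exp (-t) \<le> 1 - t + t^2"
proof -
  have "exp (-t) * (1 + t) \<le> exp (-t) * exp t"
    by (rule mult_left_mono) (auto simp: exp_ge_add_one_self)
  also have "\<dots> = 1" by (simp add: exp_minus field_simps)
  also have "\<dots> \<le> (1 - t + t^2) * (1 + t)" using assms by (simp add: algebra_simps power2_eq_square power3_eq_cube)
  finally show ?thesis using assms by (simp add: mult_le_cancel_right_pos add_pos_nonneg)
qed

lemma exp_step:
  fixes t x :: real assumes "0 \<le> t" "t \<le> 1" "x \<in> {-1,0,1}"
  shows "exp (t * x) \<le> 1 + t * x + t^2"
  using assms exp_bound[of t] exp_neg_bound[of t] by auto

lemma chernoff:
  fixes g :: "nat list \<Rightarrow> real"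
  assumes th: "0 \<le> \<theta>" "\<theta> \<le> 1" and g: "\<And>r. g r \<in> {-1,0,1}"
    and E: "(\<Sum>r\<in>rankings m. pc_weight m \<theta> r * g r) \<le> -\<delta>"
    and d: "0 < \<delta>" "\<delta> \<le> 1"
  shows "(\<Sum>P\<in>profiles m n. if 0 \<le> (\<Sum>v<n. g (P!v)) then (\<Prod>v<n. pc_weight m \<theta> (P!v)) else 0)
          \<le> exp (- (\<delta>^2/4) * n)"
proof -
  define t where "t = \<delta>/2"
  have t: "0 \<le> t" "t \<le> 1" using d by (auto simp: t_def)
  have w: "\<And>r. 0 \<le> pc_weight m \<theta> r" using pc_weight_nonneg th by blast
  have "(\<Sum>P\<in>profiles m n. if 0 \<le> (\<Sum>v<n. g (P!v)) then (\<Prod>v<n. pc_weight m \<theta> (P!v)) else 0)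
     \<le> (\<Sum>P\<in>profiles m n. (\<Prod>v<n. pc_weight m \<theta> (P!v)) * exp (t * (\<Sum>v<n. g (P!v))))"
  proof (rule sum_mono)
    fix P
    have W: "0 \<le> (\<Prod>v<n. pc_weight m \<theta> (P!v))" using w by (simp add: prod_nonneg)
    show "(if 0 \<le> (\<Sum>v<n. g (P!v)) then (\<Prod>v<n. pc_weight m \<theta> (P!v)) else 0)
      \<le> (\<Prod>v<n. pc_weight m \<theta> (P!v)) * exp (t * (\<Sum>v<n. g (P!v)))"
    proof (cases "0 \<le> (\<Sum>v<n. g (P!v))")
      case True
      hence "1 \<le> exp (t * (\<Sum>v<n. g (P!v)))" using t by simp
      thus ?thesis using True W by (simp add: mult_le_cancel_left1)
    qed (use W in simp)
  qed
  also have "\<dots> = (\<Sum>P\<in>profiles m n. \<Prod>v<n. pc_weight m \<theta> (P!v) * exp (t * g (P!v)))"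
    by (simp add: sum_distrib_left exp_sum prod.distrib)
  also have "\<dots> = (\<Sum>r\<in>rankings m. pc_weight m \<theta> r * exp (t * g r)) ^ n"
    by (rule sum_prod_profiles)
  also have "\<dots> \<le> exp (- (\<delta>^2/4)) ^ n"
  proof (rule power_mono)
    show "0 \<le> (\<Sum>r\<in>rankings m. pc_weight m \<theta> r * exp (t * g r))"
      using w by (simp add: sum_nonneg)
    have "(\<Sum>r\<in>rankings m. pc_weight m \<theta> r * exp (t * g r))
        \<le> (\<Sum>r\<in>rankings m. pc_weight m \<theta> r * (1 + t^2) + t * (pc_weight m \<theta> r * g r))"
    proof (rule sum_mono)
      fix r
      have "pc_weight m \<theta> r * exp (t * g r) \<le> pc_weight m \<theta> r * (1 + t * g r + t^2)"
        by (rule mult_left_mono[OF exp_step[OF t g] w])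
      thus "pc_weight m \<theta> r * exp (t * g r) \<le> pc_weight m \<theta> r * (1 + t^2) + t * (pc_weight m \<theta> r * g r)"
        by (simp add: algebra_simps)
    qed
    also have "\<dots> = (1 + t^2) + t * (\<Sum>r\<in>rankings m. pc_weight m \<theta> r * g r)"
      by (simp add: sum.distrib sum_distrib_left[symmetric] sum_distrib_right[symmetric] total_pc)
    also have "\<dots> \<le> (1 + t^2) + t * (-\<delta>)"
      using E t by (intro add_left_mono mult_left_mono) auto
    also have "\<dots> = 1 + (- (\<delta>^2/4))" by (simp add: t_def power2_eq_square)
    also have "\<dots> \<le> exp (- (\<delta>^2/4))" by (rule exp_ge_add_one_self)
    finally show "(\<Sum>r\<in>rankings m. pc_weight m \<theta> r * exp (t * g r)) \<le> exp (- (\<delta>^2/4))" .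
  qed
  also have "\<dots> = exp (- (\<delta>^2/4) * n)"
    by (metis exp_of_nat_mult mult.commute)
  finally show ?thesis .
qed

definition Xg :: "nat \<Rightarrow> nat list \<Rightarrow> real" where
  "Xg c r = (if hd r = c then 1 else 0) - (if hd r = 1 then 1 else 0)"

definition Yg :: "nat \<Rightarrow> nat list \<Rightarrow> real" where
  "Yg c r = (if prefers r c 1 then 1 else 0) - (if hd r = 1 then 1 else 0)"

lemma Xg_vals: "Xg c r \<in> {-1,0,1}" unfolding Xg_def by auto
lemma Yg_vals: "Yg c r \<in> {-1,0,1}" unfolding Yg_def by auto

lemma count_sum: "real (card {v. v < (n::nat) \<and> p v}) = (\<Sum>v<n. if p v then 1 else 0)"
  using sum.inter_filter[OF finite_lessThan[of n], of "\<lambda>_. 1::real" p] by simp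

lemma finite_count: "finite {v. v < (n::nat) \<and> p v}" by simp

lemma plurality_max:
  assumes "m \<ge> 1" "valid_tiebreak m tb"
  shows "plurality tb m Q \<in> {1..m} \<and> (\<forall>d\<in>{1..m}. plu_score Q d \<le> plu_score Q (plurality tb m Q))"
proof -
  define S where "S = {c \<in> {1..m}. \<forall>d \<in> {1..m}. plu_score Q d \<le> plu_score Q c}"
  define M where "M = Max (plu_score Q ` {1..m})"
  have ne: "plu_score Q ` {1..m} \<noteq> {}" using assms(1) by auto
  obtain c where c: "c \<in> {1..m}" "plu_score Q c = M" using Max_in[OF _ ne] unfolding M_def by auto
  have "\<forall>d\<in>{1..m}. plu_score Q d \<le> M" unfolding M_def by auto
  hence "c \<in> S" using c unfolding S_def by auto
  hence "S \<noteq> {}" by blast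
  moreover have "S \<subseteq> {1..m}" unfolding S_def by blast
  ultimately have "tb S \<in> S" using assms(2) unfolding valid_tiebreak_def by blast
  moreover have "plurality tb m Q = tb S" unfolding plurality_def S_def ..
  ultimately show ?thesis unfolding S_def by simp
qed

lemma CM_event:
  assumes m: "m \<ge> 2" and tb: "valid_tiebreak m tb" and P: "P \<in> profiles m n"
    and cm: "CM (plurality tb m) m P"
  shows "\<exists>c\<in>{2..m}. 0 \<le> (\<Sum>v<n. Xg c (P!v)) \<or> 0 \<le> (\<Sum>v<n. Yg c (P!v))"
proof -
  have lenP: "length P = n" using P unfolding profiles_def by auto
  have Pv: "\<And>v. v < n \<Longrightarrow> P!v \<in> rankings m" using P unfolding profiles_def by auto
  have m1: "m \<ge> 1" using m by simp
  define w where "w = plurality tb m P"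
  have wmax: "w \<in> {1..m}" "\<forall>d\<in>{1..m}. plu_score P d \<le> plu_score P w"
    using plurality_max[OF m1 tb] unfolding w_def by auto
  have scP: "\<And>c. real (plu_score P c) = (\<Sum>v<n. if hd (P!v) = c then 1 else 0)"
    unfolding plu_score_def lenP by (rule count_sum)
  show ?thesis
  proof (cases "w = 1")
    case False
    have "plu_score P 1 \<le> plu_score P w" using wmax m by auto
    hence "0 \<le> (\<Sum>v<n. Xg w (P!v))"
      unfolding Xg_def sum_subtractf scP[symmetric] by simp
    thus ?thesis using False wmax(1) by (intro bexI[of _ w]) auto
  next
    case True
    obtain Q where Q: "Q \<in> profiles m n" and ne: "plurality tb m Q \<noteq> w"
      and H: "\<forall>v<n. Q!v \<noteq> P!v \<longrightarrow> prefers (P!v) (plurality tb m Q) w"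
      using cm unfolding CM_def w_def lenP by blast
    define c where "c = plurality tb m Q"
    have lenQ: "length Q = n" using Q unfolding profiles_def by auto
    have cmax: "c \<in> {1..m}" "\<forall>d\<in>{1..m}. plu_score Q d \<le> plu_score Q c"
      using plurality_max[OF m1 tb] unfolding c_def by auto
    have c1: "c \<noteq> 1" using ne True c_def by simp
    have A: "{v. v < n \<and> hd (Q!v) = c} \<subseteq> {v. v < n \<and> prefers (P!v) c 1}"
    proof safe
      fix v assume v: "v < n" "c = hd (Q!v)"
      show "prefers (P!v) (hd (Q!v)) 1"
      proof (cases "Q!v = P!v")
        case True
        have "distinct (P!v)" "1 \<in> set (P!v)" using Pv[OF v(1)] m unfolding rankings_def by auto
        thus ?thesis using prefers_hd[of "P!v" 1] True v c1 by auto
      next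
        case False thus ?thesis using H v True c_def by auto
      qed
    qed
    have B: "{v. v < n \<and> hd (P!v) = 1} \<subseteq> {v. v < n \<and> hd (Q!v) = 1}"
    proof safe
      fix v assume v: "v < n" "hd (P!v) = 1"
      have "distinct (P!v)" "P!v \<noteq> []" using Pv[OF v(1)] m1 rankings_nonempty unfolding rankings_def by auto
      hence "\<not> prefers (P!v) c 1" using not_prefers_hd[of "P!v" c] v by auto
      hence "Q!v = P!v" using H v True c_def by auto
      thus "hd (Q!v) = 1" using v by simp
    qed
    have "card {v. v < n \<and> hd (P!v) = 1} \<le> card {v. v < n \<and> hd (Q!v) = 1}"
      by (rule card_mono[OF finite_count B])
    also have "\<dots> \<le> card {v. v < n \<and> hd (Q!v) = c}"
      using cmax m unfolding plu_score_def lenQ by auto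
    also have "\<dots> \<le> card {v. v < n \<and> prefers (P!v) c 1}"
      by (rule card_mono[OF finite_count A])
    finally have "real (card {v. v < n \<and> hd (P!v) = 1}) \<le> real (card {v. v < n \<and> prefers (P!v) c 1})"
      by simp
    hence "0 \<le> (\<Sum>v<n. Yg c (P!v))"
      unfolding Yg_def sum_subtractf count_sum by simp
    thus ?thesis using c1 cmax(1) by (intro bexI[of _ c]) auto
  qed
qed

lemma EX:
  assumes m: "m \<ge> 2" and c: "c \<in> {2..m}"
  shows "(\<Sum>r\<in>rankings m. pc_weight m \<theta> r * Xg c r) = -\<theta>"
proof -
  have m1: "m \<ge> 1" using m by simp
  have c1: "c \<in> {1..m}" "c \<noteq> 1" using c by auto
  have "(\<Sum>r\<in>rankings m. Xg c r) = Shd m c - Shd m 1"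
    unfolding Xg_def Shd_def sum_subtractf ..
  also have "\<dots> = 0" using Shd_eq[OF m1 c1(1)] by simp
  finally have s: "(\<Sum>r\<in>rankings m. Xg c r) = 0" .
  have "Xg c [1..<m+1] = -1" unfolding Xg_def using hd_idr[OF m1] c1(2) by (simp del: upt_Suc)
  thus ?thesis unfolding expect_pc s by simp
qed

lemma EY:
  assumes m: "m \<ge> 2" and c: "c \<in> {2..m}"
  shows "(\<Sum>r\<in>rankings m. pc_weight m \<theta> r * Yg c r) = -\<theta> + (1 - \<theta>) * (1/2 - 1/m)"
proof -
  have m1: "m \<ge> 1" using m by simp
  have c1: "c \<in> {1..m}" "c \<noteq> 1" using c by auto
  have "(\<Sum>r\<in>rankings m. Yg c r) = Spref m c 1 - Shd m 1"
    unfolding Yg_def Shd_def Spref_def sum_subtractf ..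
  also have "\<dots> = fact m / 2 - fact m / m" using Shd_1[OF m1] Spref_half[OF c1] by simp
  finally have s: "(\<Sum>r\<in>rankings m. Yg c r) = fact m / 2 - fact m / m" .
  have "distinct [1..<m+1]" "[1..<m+1] \<noteq> []" using m1 by auto
  hence "\<not> prefers [1..<m+1] c 1" using not_prefers_hd[of "[1..<m+1]" c] hd_idr[OF m1] by (simp del: upt_Suc)
  hence "Yg c [1..<m+1] = -1" unfolding Yg_def using hd_idr[OF m1] by (simp del: upt_Suc)
  moreover have "(1 - \<theta>) / fact m * (fact m / 2 - fact m / m) = (1 - \<theta>) * (1/2 - 1/m)"
    by (simp add: field_simps)
  ultimately show ?thesis unfolding expect_pc s by simp
qed

lemma arith_Y:
  fixes m \<theta> :: real
  assumes m: "m \<ge> 2" and th: "(m - 2) / (3 * m - 2) < \<theta>"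
  shows "(1 - \<theta>) * (1/2 - 1/m) \<le> (m - 2) / (3 * m - 2)"
proof -
  have p: "3 * m - 2 > 0" using m by simp
  have "m - 2 < \<theta> * (3 * m - 2)" using th p by (simp add: divide_less_eq)
  hence a: "(1 - \<theta>) * (3 * m - 2) \<le> 2 * m" by (simp add: algebra_simps)
  have "(1 - \<theta>) * (1/2 - 1/m) = ((1 - \<theta>) * (3 * m - 2)) * (m - 2) / (2 * m * (3 * m - 2))"
    using m p by (simp add: field_simps)
  also have "\<dots> \<le> (2 * m) * (m - 2) / (2 * m * (3 * m - 2))"
    using a m p by (intro divide_right_mono mult_right_mono) auto
  also have "\<dots> = (m - 2) / (3 * m - 2)" using m p by (simp add: field_simps)
  finally show ?thesis .
qed

theorem mainTheorem14:
  fixes m :: nat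
  assumes "m \<ge> 2"
  shows "\<exists>A > 0. \<forall>tb. valid_tiebreak m tb \<longrightarrow>
           (\<forall>\<theta> n. theta_c m < \<theta> \<and> \<theta> \<le> 1 \<and> n \<ge> 1 \<longrightarrow>
              rho (plurality tb m) m n \<theta>
                \<le> 2 * fact m * exp (- A * (\<theta> - theta_c m)^2 * real n))"
proof (intro exI[of _ "1/4"] conjI allI impI)
  fix tb \<theta> and n :: nat
  assume tb: "valid_tiebreak m tb" and h: "theta_c m < \<theta> \<and> \<theta> \<le> 1 \<and> n \<ge> 1"
  define \<delta> where "\<delta> = \<theta> - theta_c m"
  have tc0: "0 \<le> theta_c m" using assms unfolding theta_c_def by auto
  have d: "0 < \<delta>" "\<delta> \<le> 1" using h tc0 unfolding \<delta>_def by auto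
  have th: "0 \<le> \<theta>" "\<theta> \<le> 1" using h tc0 by auto
  define W where "W P = (\<Prod>v<n. pc_weight m \<theta> (P!v))" for P
  define PX where "PX c P = (if 0 \<le> (\<Sum>v<n. Xg c (P!v)) then W P else 0)" for c P
  define PY where "PY c P = (if 0 \<le> (\<Sum>v<n. Yg c (P!v)) then W P else 0)" for c P
  define e where "e = exp (- (\<delta>^2/4) * n)"
  have W0: "0 \<le> W P" for P unfolding W_def using pc_weight_nonneg[OF th] by (simp add: prod_nonneg)
  have PX0: "0 \<le> PX c P" for c P unfolding PX_def using W0 by simp
  have PY0: "0 \<le> PY c P" for c P unfolding PY_def using W0 by simp
  have boundX: "(\<Sum>P\<in>profiles m n. PX c P) \<le> e" if c: "c \<in> {2..m}" for c
    unfolding PX_def W_def e_def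
    by (rule chernoff[OF th Xg_vals _ d]) (simp add: EX[OF assms c] \<delta>_def tc0)
  have boundY: "(\<Sum>P\<in>profiles m n. PY c P) \<le> e" if c: "c \<in> {2..m}" for c
  proof -
    have "(1 - \<theta>) * (1/2 - 1/real m) \<le> theta_c m"
      unfolding theta_c_def using arith_Y[of "real m" \<theta>] assms h unfolding theta_c_def by simp
    hence "(\<Sum>r\<in>rankings m. pc_weight m \<theta> r * Yg c r) \<le> - \<delta>"
      unfolding EY[OF assms c] \<delta>_def by simp
    thus ?thesis unfolding PY_def W_def e_def by (rule chernoff[OF th Yg_vals _ d])
  qed
  have "rho (plurality tb m) m n \<theta> \<le> (\<Sum>P\<in>profiles m n. \<Sum>c\<in>{2..m}. PX c P + PY c P)"
    unfolding rho_def
  proof (rule sum_mono)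
    fix P assume P: "P \<in> profiles m n"
    have len: "length P = n" using P unfolding profiles_def by simp
    show "(if CM (plurality tb m) m P then \<Prod>v<n. pc_weight m \<theta> (P ! v) else 0)
          \<le> (\<Sum>c\<in>{2..m}. PX c P + PY c P)"
    proof (cases "CM (plurality tb m) m P")
      case True
      then obtain c where c: "c \<in> {2..m}" and "0 \<le> (\<Sum>v<n. Xg c (P!v)) \<or> 0 \<le> (\<Sum>v<n. Yg c (P!v))"
        using CM_event[OF assms tb P] by blast
      hence "W P \<le> PX c P + PY c P" unfolding PX_def PY_def using W0 PX0 PY0 by auto
      also have "\<dots> \<le> (\<Sum>c\<in>{2..m}. PX c P + PY c P)"
        by (rule member_le_sum[OF c]) (auto intro: add_nonneg_nonneg PX0 PY0)
      finally show ?thesis using True unfolding W_def by simp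
    qed (simp add: sum_nonneg add_nonneg_nonneg PX0 PY0)
  qed
  also have "\<dots> = (\<Sum>c\<in>{2..m}. (\<Sum>P\<in>profiles m n. PX c P) + (\<Sum>P\<in>profiles m n. PY c P))"
    by (subst sum.swap) (simp add: sum.distrib)
  also have "\<dots> \<le> (\<Sum>c\<in>{2..m}. 2 * e)"
    by (rule sum_mono) (use boundX boundY in fastforce)
  also have "\<dots> = real (m - 1) * (2 * e)" using assms by simp
  also have "\<dots> \<le> fact m * (2 * e)"
  proof (rule mult_right_mono)
    have "real (m - 1) \<le> real m" by simp
    also have "\<dots> \<le> fact m" using fact_ge_self[of m] by (metis of_nat_fact of_nat_le_iff)
    finally show "real (m - 1) \<le> fact m" .
  qed (simp add: e_def)
  also have "\<dots> = 2 * fact m * exp (- (1/4) * (\<theta> - theta_c m)^2 * real n)"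
    unfolding e_def \<delta>_def by (simp add: algebra_simps)
  finally show "rho (plurality tb m) m n \<theta> \<le> 2 * fact m * exp (- (1/4) * (\<theta> - theta_c m)^2 * real n)" .
qed simp

end
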